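(* Let $T=(T,\eta,\mu)$ be a monad on a category $\mathbb{C}$. A morphism $f:A\rightsquigarrow B$ of $\mathsf{Kl}(T)$ is thunkable if and only if $\eta_{TB}\circ f^\sharp=T(\eta_B)\circ f^\sharp$ as morphisms $A\to TTB$ in $\mathbb{C}$.
   Context: $\mathsf{Kl}(T)$ has the objects of $\mathbb{C}$; morphisms $f:A\rightsquigarrow B$ correspond to $f^\sharp:A\to TB$; composition $(g\circledcirc f)^\sharp=\mu\circ T(g^\sharp)\circ f^\sharp$; identities $\eta$. Define $\mathsf{thunk}_A:A\rightsquigarrow TA$ by $\mathsf{thunk}_A^\sharp=\eta_{TA}\circ\eta_A$ and the functor $\tilde T:\mathsf{Kl}(T)\to\mathsf{Kl}(T)$ by $\tilde TA=TA$ and $(\tilde Tf)^\sharp=\eta_{TB}\circ\mu_B\circ T(f^\sharp)$. A morphism $f:A\rightsquigarrow B$ is thunkable if $\mathsf{thunk}_B\circledcirc f=\tilde Tf\circledcirc\mathsf{thunk}_A$. *)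

theory Defs
  imports Main
begin

text \<open>A (small) category presented by objects, arrows, domain, codomain,
  composition and identities.  comp g f is g after f.\<close>

record ('o, 'a) category =
  Obj  :: "'o set"
  Arr  :: "'a set"
  dom  :: "'a \<Rightarrow> 'o"
  cod  :: "'a \<Rightarrow> 'o"
  comp :: "'a \<Rightarrow> 'a \<Rightarrow> 'a"
  ident :: "'o \<Rightarrow> 'a"

definition hom :: "('o, 'a) category \<Rightarrow> 'o \<Rightarrow> 'o \<Rightarrow> 'a set" where
  "hom C A B = {f \<in> Arr C. dom C f = A \<and> cod C f = B}"

definition is_category :: "('o, 'a) category \<Rightarrow> bool" where
  "is_category C \<longleftrightarrow>
     (\<forall>f \<in> Arr C. dom C f \<in> Obj C \<and> cod C f \<in> Obj C) \<and>
     (\<forall>A \<in> Obj C. ident C A \<in> hom C A A) \<and>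
     (\<forall>A \<in> Obj C. \<forall>B \<in> Obj C. \<forall>D \<in> Obj C. \<forall>f \<in> hom C A B. \<forall>g \<in> hom C B D.
         comp C g f \<in> hom C A D) \<and>
     (\<forall>A \<in> Obj C. \<forall>B \<in> Obj C. \<forall>f \<in> hom C A B.
         comp C f (ident C A) = f \<and> comp C (ident C B) f = f) \<and>
     (\<forall>A \<in> Obj C. \<forall>B \<in> Obj C. \<forall>D \<in> Obj C. \<forall>E \<in> Obj C.
       \<forall>f \<in> hom C A B. \<forall>g \<in> hom C B D. \<forall>h \<in> hom C D E.
         comp C h (comp C g f) = comp C (comp C h g) f)"

text \<open>A monad (T, eta, mu) on C: TO is the object part of the endofunctor T,
  TA its arrow part.\<close>

definition is_monad ::
  "('o, 'a) category \<Rightarrow> ('o \<Rightarrow> 'o) \<Rightarrow> ('a \<Rightarrow> 'a) \<Rightarrow> ('o \<Rightarrow> 'a) \<Rightarrow> ('o \<Rightarrow> 'a) \<Rightarrow> bool" where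
  "is_monad C TO TA eta mu \<longleftrightarrow>
     is_category C \<and>
     \<comment> \<open>T is an endofunctor\<close>
     (\<forall>A \<in> Obj C. TO A \<in> Obj C) \<and>
     (\<forall>A \<in> Obj C. \<forall>B \<in> Obj C. \<forall>f \<in> hom C A B. TA f \<in> hom C (TO A) (TO B)) \<and>
     (\<forall>A \<in> Obj C. TA (ident C A) = ident C (TO A)) \<and>
     (\<forall>A \<in> Obj C. \<forall>B \<in> Obj C. \<forall>D \<in> Obj C. \<forall>f \<in> hom C A B. \<forall>g \<in> hom C B D.
         TA (comp C g f) = comp C (TA g) (TA f)) \<and>
     \<comment> \<open>eta : Id \<Rightarrow> T and mu : TT \<Rightarrow> T natural transformations\<close>
     (\<forall>A \<in> Obj C. eta A \<in> hom C A (TO A)) \<and>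
     (\<forall>A \<in> Obj C. mu A \<in> hom C (TO (TO A)) (TO A)) \<and>
     (\<forall>A \<in> Obj C. \<forall>B \<in> Obj C. \<forall>f \<in> hom C A B.
         comp C (TA f) (eta A) = comp C (eta B) f) \<and>
     (\<forall>A \<in> Obj C. \<forall>B \<in> Obj C. \<forall>f \<in> hom C A B.
         comp C (TA f) (mu A) = comp C (mu B) (TA (TA f))) \<and>
     \<comment> \<open>monad laws\<close>
     (\<forall>A \<in> Obj C. comp C (mu A) (eta (TO A)) = ident C (TO A)) \<and>
     (\<forall>A \<in> Obj C. comp C (mu A) (TA (eta A)) = ident C (TO A)) \<and>
     (\<forall>A \<in> Obj C. comp C (mu A) (TA (mu A)) = comp C (mu A) (mu (TO A)))"

text \<open>Kleisli morphisms f : A \<leadsto> B are represented by f^sharp \<in> hom C A (TO B).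
  Kleisli composition of g : B \<leadsto> D after f : A \<leadsto> B (target object D needed
  for mu).\<close>

definition kl_comp ::
  "('o, 'a) category \<Rightarrow> ('a \<Rightarrow> 'a) \<Rightarrow> ('o \<Rightarrow> 'a) \<Rightarrow> 'o \<Rightarrow> 'a \<Rightarrow> 'a \<Rightarrow> 'a" where
  "kl_comp C TA mu D g f = comp C (mu D) (comp C (TA g) f)"

definition thunk ::
  "('o, 'a) category \<Rightarrow> ('o \<Rightarrow> 'o) \<Rightarrow> ('o \<Rightarrow> 'a) \<Rightarrow> 'o \<Rightarrow> 'a" where
  "thunk C TO eta A = comp C (eta (TO A)) (eta A)"

definition kl_T ::
  "('o, 'a) category \<Rightarrow> ('o \<Rightarrow> 'o) \<Rightarrow> ('a \<Rightarrow> 'a) \<Rightarrow> ('o \<Rightarrow> 'a) \<Rightarrow> ('o \<Rightarrow> 'a) \<Rightarrow> 'o \<Rightarrow> 'a \<Rightarrow> 'a" where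
  "kl_T C TO TA eta mu B f = comp C (eta (TO B)) (comp C (mu B) (TA f))"

text \<open>Both sides are Kleisli morphisms A \<leadsto> TB, so the Kleisli multiplication used
  is mu_{TB}.\<close>
definition thunkable ::
  "('o, 'a) category \<Rightarrow> ('o \<Rightarrow> 'o) \<Rightarrow> ('a \<Rightarrow> 'a) \<Rightarrow> ('o \<Rightarrow> 'a) \<Rightarrow> ('o \<Rightarrow> 'a)
     \<Rightarrow> 'o \<Rightarrow> 'o \<Rightarrow> 'a \<Rightarrow> bool" where
  "thunkable C TO TA eta mu A B f \<longleftrightarrow>
     kl_comp C TA mu (TO B) (thunk C TO eta B) f =
     kl_comp C TA mu (TO B) (kl_T C TO TA eta mu B f) (thunk C TO eta A)"

end

theory Submission
  imports Defs
begin

lemma hom_objs: "is_category C \<Longrightarrow> f \<in> hom C X Y \<Longrightarrow> X \<in> Obj C \<and> Y \<in> Obj C"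
  unfolding is_category_def hom_def by auto

lemma cat_comp: "is_category C \<Longrightarrow> f \<in> hom C X Y \<Longrightarrow> g \<in> hom C Y Z \<Longrightarrow> comp C g f \<in> hom C X Z"
  using hom_objs[of C f X Y] hom_objs[of C g Y Z] unfolding is_category_def by blast

lemma cat_assoc: "is_category C \<Longrightarrow> f \<in> hom C X Y \<Longrightarrow> g \<in> hom C Y Z \<Longrightarrow> h \<in> hom C Z W
  \<Longrightarrow> comp C h (comp C g f) = comp C (comp C h g) f"
  using hom_objs[of C f X Y] hom_objs[of C g Y Z] hom_objs[of C h Z W] unfolding is_category_def by blast

lemma cat_idl: "is_category C \<Longrightarrow> f \<in> hom C X Y \<Longrightarrow> comp C (ident C Y) f = f"
  using hom_objs[of C f X Y] unfolding is_category_def by blast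

theorem proposition3p13:
  fixes C :: "('o, 'a) category"
  assumes "is_monad C TO TA eta mu"
    and "A \<in> Obj C" and "B \<in> Obj C"
    and "f \<in> hom C A (TO B)"
  shows "thunkable C TO TA eta mu A B f \<longleftrightarrow>
         comp C (eta (TO B)) f = comp C (TA (eta B)) f"
proof -
  note M = assms(1)[unfolded is_monad_def]
  have cat: "is_category C" using M by simp
  have TO: "\<And>X. X \<in> Obj C \<Longrightarrow> TO X \<in> Obj C" using M by simp
  have TAh: "\<And>X Y g. X \<in> Obj C \<Longrightarrow> Y \<in> Obj C \<Longrightarrow> g \<in> hom C X Y \<Longrightarrow> TA g \<in> hom C (TO X) (TO Y)" using M by simp
  have TAc: "\<And>X Y Z g h. X \<in> Obj C \<Longrightarrow> Y \<in> Obj C \<Longrightarrow> Z \<in> Obj C \<Longrightarrow> g \<in> hom C X Y \<Longrightarrow> h \<in> hom C Y Z \<Longrightarrow> TA (comp C h g) = comp C (TA h) (TA g)" using M by simp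
  have eh: "\<And>X. X \<in> Obj C \<Longrightarrow> eta X \<in> hom C X (TO X)" using M by simp
  have mh: "\<And>X. X \<in> Obj C \<Longrightarrow> mu X \<in> hom C (TO (TO X)) (TO X)" using M by simp
  have en: "\<And>X Y g. X \<in> Obj C \<Longrightarrow> Y \<in> Obj C \<Longrightarrow> g \<in> hom C X Y \<Longrightarrow> comp C (TA g) (eta X) = comp C (eta Y) g" using M by simp
  have l1: "\<And>X. X \<in> Obj C \<Longrightarrow> comp C (mu X) (eta (TO X)) = ident C (TO X)" using M by simp
  have l2: "\<And>X. X \<in> Obj C \<Longrightarrow> comp C (mu X) (TA (eta X)) = ident C (TO X)" using M by simp
  have A: "A \<in> Obj C" and B: "B \<in> Obj C" by fact+
  have TB: "TO B \<in> Obj C" and TTB: "TO (TO B) \<in> Obj C" and TA': "TO A \<in> Obj C"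
    and TTTB: "TO (TO (TO B)) \<in> Obj C" using TO A B by auto
  have f: "f \<in> hom C A (TO B)" by fact
  have eB: "eta B \<in> hom C B (TO B)" using eh B .
  have eTB: "eta (TO B) \<in> hom C (TO B) (TO (TO B))" using eh TB .
  have eTTB: "eta (TO (TO B)) \<in> hom C (TO (TO B)) (TO (TO (TO B)))" using eh TTB .
  have eA: "eta A \<in> hom C A (TO A)" using eh A .
  have eTA: "eta (TO A) \<in> hom C (TO A) (TO (TO A))" using eh TA' .
  have mB: "mu B \<in> hom C (TO (TO B)) (TO B)" using mh B .
  have mTB: "mu (TO B) \<in> hom C (TO (TO (TO B))) (TO (TO B))" using mh TB .
  have TeB: "TA (eta B) \<in> hom C (TO B) (TO (TO B))" using TAh B TB eB .
  have TeTB: "TA (eta (TO B)) \<in> hom C (TO (TO B)) (TO (TO (TO B)))" using TAh TB TTB eTB .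
  have Tf: "TA f \<in> hom C (TO A) (TO (TO B))" using TAh A TB f .
  define g where "g = comp C (eta (TO B)) (comp C (mu B) (TA f))"
  have mTf: "comp C (mu B) (TA f) \<in> hom C (TO A) (TO B)" using cat_comp[OF cat Tf mB] .
  have g: "g \<in> hom C (TO A) (TO (TO B))" unfolding g_def using cat_comp[OF cat mTf eTB] .
  have Tg: "TA g \<in> hom C (TO (TO A)) (TO (TO (TO B)))" using TAh TA' TTB g .
  have LHS: "kl_comp C TA mu (TO B) (thunk C TO eta B) f = comp C (TA (eta B)) f"
  proof -
    have "kl_comp C TA mu (TO B) (thunk C TO eta B) f
        = comp C (mu (TO B)) (comp C (comp C (TA (eta (TO B))) (TA (eta B))) f)"
      unfolding kl_comp_def thunk_def using TAc[OF B TB TTB eB eTB] by simp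
    also have "\<dots> = comp C (comp C (mu (TO B)) (TA (eta (TO B)))) (comp C (TA (eta B)) f)"
      using cat_assoc[OF cat f TeB TeTB] cat_assoc[OF cat cat_comp[OF cat f TeB] TeTB mTB] by simp
    also have "\<dots> = comp C (TA (eta B)) f"
      using l2[OF TB] cat_idl[OF cat cat_comp[OF cat f TeB]] by simp
    finally show ?thesis .
  qed
  have RHS: "kl_comp C TA mu (TO B) (kl_T C TO TA eta mu B f) (thunk C TO eta A) = comp C (eta (TO B)) f"
  proof -
    have "kl_comp C TA mu (TO B) (kl_T C TO TA eta mu B f) (thunk C TO eta A)
        = comp C (mu (TO B)) (comp C (TA g) (comp C (eta (TO A)) (eta A)))"
      unfolding kl_comp_def thunk_def kl_T_def g_def by simp
    also have "\<dots> = comp C (mu (TO B)) (comp C (comp C (TA g) (eta (TO A))) (eta A))"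
      using cat_assoc[OF cat eA eTA Tg] by simp
    also have "\<dots> = comp C (mu (TO B)) (comp C (comp C (eta (TO (TO B))) g) (eta A))"
      using en[OF TA' TTB g] by simp
    also have "\<dots> = comp C (comp C (mu (TO B)) (eta (TO (TO B)))) (comp C g (eta A))"
      using cat_assoc[OF cat eA g eTTB] cat_assoc[OF cat cat_comp[OF cat eA g] eTTB mTB] by simp
    also have "\<dots> = comp C g (eta A)"
      using l1[OF TB] cat_idl[OF cat cat_comp[OF cat eA g]] by simp
    also have "\<dots> = comp C (eta (TO B)) (comp C (mu B) (comp C (TA f) (eta A)))"
      unfolding g_def using cat_assoc[OF cat eA mTf eTB] cat_assoc[OF cat eA Tf mB] by simp
    also have "\<dots> = comp C (eta (TO B)) (comp C (mu B) (comp C (eta (TO B)) f))"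
      using en[OF A TB f] by simp
    also have "\<dots> = comp C (eta (TO B)) (comp C (comp C (mu B) (eta (TO B))) f)"
      using cat_assoc[OF cat f eTB mB] by simp
    also have "\<dots> = comp C (eta (TO B)) f"
      using l1[OF B] cat_idl[OF cat f] by simp
    finally show ?thesis .
  qed
  show ?thesis unfolding thunkable_def LHS RHS by auto
qed

end
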